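(* Let $\mathcal D$, $f(\cdot;\xi)$, $F$ and the DiSK iteration (with SGD base update) be as described in the context, suppose Assumptions (A1)–(A3) hold, and choose $C\ge\left(1+\frac{2(1-\kappa)}{\kappa}\right)G$. Define $\Delta_t=\nabla F(x_t)-\tilde g_t$ and $M_\gamma=1+\frac{4(2+1/\kappa+|1+\gamma|)}{\gamma^2}$. Then for every $t\ge1$, $$\mathbb E_t\|\Delta_t\|^2\le(1-\kappa)^2\left(1+4\eta^2L^2+|1+\gamma|\left(\kappa+2\eta^2L^2M_\gamma\right)\right)\|\Delta_{t-1}\|^2+2\eta^2L^2(1-\kappa)^2\left(2+|1+\gamma|M_\gamma\right)\|\nabla F(x_{t-1})\|^2+\kappa^2\left((2+|1+\gamma|)\frac{\sigma_{\mathrm{SGD}}^2}{B}+d\sigma_{\mathrm{DP}}^2\right),$$ where $\mathbb E_t$ denotes expectation conditioned on all information before iteration $t$ (i.e. on $x_0,\dots,x_t$ and $\tilde g_0,\dots,\tilde g_{t-1}$).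
   Context: Let $\mathcal D=\{\xi_1,\dots,\xi_N\}$ be a finite dataset, $f(\cdot;\xi):\mathbb R^d\to\mathbb R$ differentiable loss functions, $F(x)=\frac1N\sum_{\xi\in\mathcal D}f(x;\xi)$. For $v\in\mathbb R^d$, $\mathrm{clip}(v,C)=\min\{1,C/\|v\|\}\,v$. DiSK iteration with SGD base update, parameters $x_0\in\mathbb R^d$, step size $\eta>0$, $\gamma\neq0$, $\kappa\in(0,1]$, clipping threshold $C>0$, noise level $\sigma_{\mathrm{DP}}\ge0$, batch size $B\ge1$: initialize $\tilde g_{-1}=0$, $d_{-1}=0$; for $t=0,1,\dots$: draw a minibatch $\mathcal B_t$ of $B$ samples uniformly at random from $\mathcal D$ (independently of the past), set $a=\frac{1-\kappa}{\kappa\gamma}$ and $g_t=\frac1B\sum_{\xi\in\mathcal B_t}\mathrm{clip}\big(a\nabla f(x_t+\gamma d_{t-1};\xi)+(1-a)\nabla f(x_t;\xi),C\big)+w_t$ with $w_t\sim\mathcal N(0,\sigma_{\mathrm{DP}}^2I_d)$ independent of everything else; $\tilde g_t=(1-\kappa)\tilde g_{t-1}+\kappa g_t$; $x_{t+1}=x_t-\eta\tilde g_t$; $d_t=x_{t+1}-x_t$. Assumptions: (A1) each $f(\cdot;\xi)$ is $L$-smooth: $\|\nabla f(x;\xi)-\nabla f(y;\xi)\|\le L\|x-y\|$ for all $x,y,\xi$; (A2) $\frac1N\sum_{\xi\in\mathcal D}\|\nabla f(x;\xi)-\nabla F(x)\|^2\le\sigma_{\mathrm{SGD}}^2$ for all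 $x$; (A3) $\|\nabla f(x;\xi)\|\le G$ for all $x,\xi$. *)

theory Defs
  imports "HOL-Analysis.Analysis" "HOL-Probability.Probability"
begin

text \<open>Clipping: clip(v,C) = min{1, C/||v||} v  (for v = 0 this is 0 in Isabelle, as intended).\<close>
definition clip :: "real ^ 'd \<Rightarrow> real \<Rightarrow> real ^ 'd" where
  "clip v C = min 1 (C / norm v) *\<^sub>R v"

text \<open>Uniform minibatch: B indices drawn independently and uniformly from the data indices {0..<N}
  (a list of length B; sums over the minibatch are sums over this list).\<close>
definition batch_pmf :: "nat \<Rightarrow> nat \<Rightarrow> nat list pmf" where
  "batch_pmf N B = pmf_of_set {bs. set bs \<subseteq> {..<N} \<and> length bs = B}"

definition gauss_noise :: "real \<Rightarrow> (real ^ 'd) measure" where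
  "gauss_noise \<sigma> = distr (Pi\<^sub>M UNIV (\<lambda>i::'d. density lborel std_normal_density)) borel
                        (\<lambda>z. \<sigma> *\<^sub>R (\<chi> i. z i))"

text \<open>One DiSK step. State = (x_t, gtilde_{t-1}, d_{t-1}); input = (minibatch, noise w_t);
  gf i x is the gradient of f(.;xi_i) at x. Result = (x_{t+1}, gtilde_t, d_t).\<close>
definition disk_step ::
  "(nat \<Rightarrow> real ^ 'd \<Rightarrow> real ^ 'd) \<Rightarrow> real \<Rightarrow> real \<Rightarrow> real \<Rightarrow> real \<Rightarrow> nat \<Rightarrow>
   ((real ^ 'd) \<times> (real ^ 'd) \<times> (real ^ 'd)) \<Rightarrow> nat list \<Rightarrow> real ^ 'd \<Rightarrow>
   ((real ^ 'd) \<times> (real ^ 'd) \<times> (real ^ 'd))" where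
  "disk_step gf \<eta> \<gamma> \<kappa> C B s bt w =
     (let x = fst s; gt = fst (snd s); d = snd (snd s);
          a = (1 - \<kappa>) / (\<kappa> * \<gamma>);
          g = (1 / real B) *\<^sub>R (\<Sum>i\<leftarrow>bt. clip (a *\<^sub>R gf i (x + \<gamma> *\<^sub>R d) + (1 - a) *\<^sub>R gf i x) C) + w;
          gt' = (1 - \<kappa>) *\<^sub>R gt + \<kappa> *\<^sub>R g;
          x' = x - \<eta> *\<^sub>R gt'
      in (x', gt', x' - x))"

text \<open>The DiSK trajectory for a realisation (bs t = minibatch B_t, ws t = noise w_t):
  disk_state ... t = (x_t, gtilde_{t-1}, d_{t-1}), with gtilde_{-1} = d_{-1} = 0.\<close>
fun disk_state ::
  "(nat \<Rightarrow> real ^ 'd \<Rightarrow> real ^ 'd) \<Rightarrow> real ^ 'd \<Rightarrow> real \<Rightarrow> real \<Rightarrow> real \<Rightarrow> real \<Rightarrow> nat \<Rightarrow>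
   (nat \<Rightarrow> nat list) \<Rightarrow> (nat \<Rightarrow> real ^ 'd) \<Rightarrow> nat \<Rightarrow> ((real ^ 'd) \<times> (real ^ 'd) \<times> (real ^ 'd))" where
  "disk_state gf x0 \<eta> \<gamma> \<kappa> C B bs ws 0 = (x0, 0, 0)"
| "disk_state gf x0 \<eta> \<gamma> \<kappa> C B bs ws (Suc t) =
     disk_step gf \<eta> \<gamma> \<kappa> C B (disk_state gf x0 \<eta> \<gamma> \<kappa> C B bs ws t) (bs t) (ws t)"

end

theory Submission
  imports Defs
begin

lemma std_normal_sq:
  fixes a b :: real
  shows "(\<integral>\<^sup>+u. ennreal ((a - b*u)\<^sup>2) \<partial>(density lborel std_normal_density)) = ennreal (a\<^sup>2 + b\<^sup>2)"
proof -
  have m0: "has_bochner_integral lborel (\<lambda>x. std_normal_density x * x ^ (2 * 0)) 1"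
    using std_normal_moment_even[of 0] by simp
  have m1: "has_bochner_integral lborel (\<lambda>x. std_normal_density x * x ^ (2 * 0 + 1)) 0"
    using std_normal_moment_odd[of 0] by simp
  have m2: "has_bochner_integral lborel (\<lambda>x. std_normal_density x * x ^ (2 * 1)) 1"
    using std_normal_moment_even[of 1] by simp
  have "has_bochner_integral lborel (\<lambda>x. a\<^sup>2 * (std_normal_density x * x ^ (2 * 0))
      - 2*a*b * (std_normal_density x * x ^ (2 * 0 + 1)) + b\<^sup>2 * (std_normal_density x * x ^ (2 * 1)))
      (a\<^sup>2 * 1 - 2*a*b*0 + b\<^sup>2 * 1)"
    by (intro has_bochner_integral_add has_bochner_integral_diff has_bochner_integral_mult_right m0 m1 m2)
  moreover have "(\<lambda>x. a\<^sup>2 * (std_normal_density x * x ^ (2 * 0))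
      - 2*a*b * (std_normal_density x * x ^ (2 * 0 + 1)) + b\<^sup>2 * (std_normal_density x * x ^ (2 * 1)))
     = (\<lambda>x. std_normal_density x *\<^sub>R (a - b*x)\<^sup>2)"
    by (rule ext) (simp add: power2_eq_square algebra_simps)
  ultimately have hb: "has_bochner_integral lborel (\<lambda>x. std_normal_density x *\<^sub>R (a - b*x)\<^sup>2) (a\<^sup>2 + b\<^sup>2)"
    by simp
  have hd: "has_bochner_integral (density lborel std_normal_density) (\<lambda>x. (a - b*x)\<^sup>2) (a\<^sup>2 + b\<^sup>2)"
    by (rule has_bochner_integral_density[OF _ _ _ hb]) (auto simp: normal_density_nonneg)
  show ?thesis
    using hd by (subst nn_integral_eq_integral) (auto simp: has_bochner_integral_iff)
qed

lemma norm_sq_vec: "(norm (v::real^'d))\<^sup>2 = (\<Sum>i\<in>UNIV. (v$i)\<^sup>2)"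
proof -
  have "(norm v)\<^sup>2 = v \<bullet> v" by (rule power2_norm_eq_inner)
  also have "\<dots> = (\<Sum>i\<in>UNIV. (v$i)\<^sup>2)" by (simp add: inner_vec_def power2_eq_square)
  finally show ?thesis .
qed

lemma gauss_sq:
  fixes m :: "real^'d" and c \<sigma> :: real
  shows "(\<integral>\<^sup>+w. ennreal ((norm (m - c *\<^sub>R w))\<^sup>2) \<partial>(gauss_noise \<sigma>))
       = ennreal ((norm m)\<^sup>2 + c\<^sup>2 * real CARD('d) * \<sigma>\<^sup>2)"
proof -
  let ?N = "density lborel std_normal_density"
  let ?P = "Pi\<^sub>M (UNIV::'d set) (\<lambda>i. ?N)"
  have meas: "(\<lambda>z. \<sigma> *\<^sub>R (\<chi> i. z i)) \<in> measurable ?P (borel :: (real^'d) measure)"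
  proof (subst borel_measurable_euclidean_space, intro ballI)
    fix b :: "real^'d" assume "b \<in> Basis"
    then obtain j where b: "b = axis j 1" by (auto simp: Basis_vec_def)
    show "(\<lambda>z. (\<sigma> *\<^sub>R (\<chi> i. z i)) \<bullet> b) \<in> borel_measurable ?P"
      unfolding b by (simp add: inner_axis)
  qed
  have "(\<integral>\<^sup>+w. ennreal ((norm (m - c *\<^sub>R w))\<^sup>2) \<partial>(gauss_noise \<sigma>))
     = (\<integral>\<^sup>+z. ennreal ((norm (m - c *\<^sub>R (\<sigma> *\<^sub>R (\<chi> i. z i))))\<^sup>2) \<partial>?P)"
    unfolding gauss_noise_def by (rule nn_integral_distr[OF meas]) simp
  also have "\<dots> = (\<integral>\<^sup>+z. (\<Sum>i\<in>UNIV. ennreal ((m$i - (c*\<sigma>) * z i)\<^sup>2)) \<partial>?P)"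
    by (intro nn_integral_cong) (simp add: norm_sq_vec algebra_simps)
  also have "\<dots> = (\<Sum>i\<in>UNIV. (\<integral>\<^sup>+z. ennreal ((m$i - (c*\<sigma>) * z i)\<^sup>2) \<partial>?P))"
    by (rule nn_integral_sum) (intro measurable_compose[OF _ measurable_ennreal] borel_measurable_power borel_measurable_diff borel_measurable_times measurable_const measurable_component_singleton; simp)
  also have "\<dots> = (\<Sum>i\<in>UNIV. (\<integral>\<^sup>+u. ennreal ((m$i - (c*\<sigma>) * u)\<^sup>2) \<partial>?N))"
  proof (rule sum.cong[OF refl])
    fix i :: 'd
    have "(\<integral>\<^sup>+u. ennreal ((m$i - (c*\<sigma>) * u)\<^sup>2) \<partial>?N)
       = (\<integral>\<^sup>+u. ennreal ((m$i - (c*\<sigma>) * u)\<^sup>2) \<partial>(distr ?P ?N (\<lambda>\<omega>. \<omega> i)))"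
      using distr_PiM_component[of UNIV "\<lambda>i. ?N" i] prob_space_normal_density by simp
    also have "\<dots> = (\<integral>\<^sup>+z. ennreal ((m$i - (c*\<sigma>) * z i)\<^sup>2) \<partial>?P)"
      by (rule nn_integral_distr) (auto intro: measurable_component_singleton)
    finally show "(\<integral>\<^sup>+z. ennreal ((m$i - (c*\<sigma>) * z i)\<^sup>2) \<partial>?P) = (\<integral>\<^sup>+u. ennreal ((m$i - (c*\<sigma>) * u)\<^sup>2) \<partial>?N)"
      by simp
  qed
  also have "\<dots> = (\<Sum>i\<in>UNIV. ennreal ((m$i)\<^sup>2 + (c*\<sigma>)\<^sup>2))"
    by (simp add: std_normal_sq)
  also have "\<dots> = ennreal (\<Sum>i\<in>UNIV. (m$i)\<^sup>2 + (c*\<sigma>)\<^sup>2)"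
    by (rule sum_ennreal) simp
  also have "(\<Sum>i\<in>UNIV. (m$i)\<^sup>2 + (c*\<sigma>)\<^sup>2) = (norm m)\<^sup>2 + c\<^sup>2 * real CARD('d) * \<sigma>\<^sup>2"
    by (simp add: sum.distrib norm_sq_vec power_mult_distrib)
  finally show ?thesis .
qed

lemma norm_add_sq: "(norm (a + b :: real^'d))\<^sup>2 = (norm a)\<^sup>2 + 2 * (a \<bullet> b) + (norm b)\<^sup>2"
  by (simp add: power2_norm_eq_inner inner_add_left inner_add_right inner_commute)

lemma norm_diff_sq: "(norm (a - b :: real^'d))\<^sup>2 = (norm a)\<^sup>2 - 2 * (a \<bullet> b) + (norm b)\<^sup>2"
  by (simp add: power2_norm_eq_inner inner_diff_left inner_diff_right inner_commute)

lemma sum_lists_Suc: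
  "(\<Sum>bs\<in>{bs. set bs \<subseteq> A \<and> length bs = Suc n}. f bs)
   = (\<Sum>xs\<in>{bs. set bs \<subseteq> A \<and> length bs = n}. \<Sum>i\<in>A. f (i # xs))"
proof -
  have "(\<Sum>bs\<in>{bs. set bs \<subseteq> A \<and> length bs = Suc n}. f bs)
      = (\<Sum>p\<in>{bs. set bs \<subseteq> A \<and> length bs = n} \<times> A. f ((\<lambda>(xs, i). i # xs) p))"
    unfolding lists_length_Suc_eq by (rule sum.reindex[unfolded comp_def]) (rule inj_split_Cons)
  also have "\<dots> = (\<Sum>xs\<in>{bs. set bs \<subseteq> A \<and> length bs = n}. \<Sum>i\<in>A. f (i # xs))"
    by (simp add: sum.cartesian_product split_def)
  finally show ?thesis .
qed

lemma batch_sum0: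
  fixes y :: "nat \<Rightarrow> real^'d"
  assumes "(\<Sum>i<N. y i) = 0"
  shows "(\<Sum>bs\<in>{bs. set bs \<subseteq> {..<N} \<and> length bs = B}. (\<Sum>i\<leftarrow>bs. y i)) = 0"
proof (induction B)
  case 0
  then show ?case by simp
next
  case (Suc B)
  let ?S = "{bs. set bs \<subseteq> {..<N} \<and> length bs = B}"
  have "(\<Sum>bs\<in>{bs. set bs \<subseteq> {..<N} \<and> length bs = Suc B}. (\<Sum>i\<leftarrow>bs. y i))
      = (\<Sum>xs\<in>?S. \<Sum>i<N. (y i + (\<Sum>j\<leftarrow>xs. y j)))"
    by (simp add: sum_lists_Suc)
  also have "\<dots> = (\<Sum>xs\<in>?S. (\<Sum>i<N. y i) + of_nat N *\<^sub>R (\<Sum>j\<leftarrow>xs. y j))"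
    by (simp add: sum.distrib scaleR_conv_of_real)
  also have "\<dots> = of_nat N *\<^sub>R (\<Sum>xs\<in>?S. (\<Sum>j\<leftarrow>xs. y j))"
    using assms by (simp add: scaleR_sum_right)
  also have "\<dots> = 0" using Suc by simp
  finally show ?case .
qed

lemma batch_sumsq:
  fixes y :: "nat \<Rightarrow> real^'d"
  assumes "(\<Sum>i<N. y i) = 0"
  shows "real N * (\<Sum>bs\<in>{bs. set bs \<subseteq> {..<N} \<and> length bs = B}. (norm (\<Sum>i\<leftarrow>bs. y i))\<^sup>2)
         = real B * real N ^ B * (\<Sum>i<N. (norm (y i))\<^sup>2)"
proof (induction B)
  case 0
  then show ?case by simp
next
  case (Suc B)
  let ?S = "{bs. set bs \<subseteq> {..<N} \<and> length bs = B}"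
  let ?V = "(\<Sum>i<N. (norm (y i))\<^sup>2)"
  have cS: "card ?S = N ^ B" using card_lists_length_eq[of "{..<N}" B] by simp
  have "(\<Sum>bs\<in>{bs. set bs \<subseteq> {..<N} \<and> length bs = Suc B}. (norm (\<Sum>i\<leftarrow>bs. y i))\<^sup>2)
      = (\<Sum>xs\<in>?S. \<Sum>i<N. (norm (y i + (\<Sum>j\<leftarrow>xs. y j)))\<^sup>2)"
    by (simp add: sum_lists_Suc)
  also have "\<dots> = (\<Sum>xs\<in>?S. \<Sum>i<N. ((norm (y i))\<^sup>2 + 2 * (y i \<bullet> (\<Sum>j\<leftarrow>xs. y j)) + (norm (\<Sum>j\<leftarrow>xs. y j))\<^sup>2))"
    by (simp add: norm_add_sq)
  also have "\<dots> = (\<Sum>xs\<in>?S. ?V + 2 * ((\<Sum>i<N. y i) \<bullet> (\<Sum>j\<leftarrow>xs. y j)) + real N * (norm (\<Sum>j\<leftarrow>xs. y j))\<^sup>2)"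
    by (simp add: sum.distrib sum_distrib_left inner_sum_left)
  also have "\<dots> = (\<Sum>xs\<in>?S. ?V + real N * (norm (\<Sum>j\<leftarrow>xs. y j))\<^sup>2)"
    using assms by simp
  also have "\<dots> = real (N ^ B) * ?V + real N * (\<Sum>xs\<in>?S. (norm (\<Sum>j\<leftarrow>xs. y j))\<^sup>2)"
    by (simp add: sum.distrib sum_distrib_left cS)
  finally have "real N * (\<Sum>bs\<in>{bs. set bs \<subseteq> {..<N} \<and> length bs = Suc B}. (norm (\<Sum>i\<leftarrow>bs. y i))\<^sup>2)
     = real N * (real (N ^ B) * ?V) + real N * (real N * (\<Sum>xs\<in>?S. (norm (\<Sum>j\<leftarrow>xs. y j))\<^sup>2))"
    by (simp add: algebra_simps)
  also have "\<dots> = real N * (real (N ^ B) * ?V) + real N * (real B * real N ^ B * ?V)"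
    using Suc by simp
  also have "\<dots> = real (Suc B) * real N ^ Suc B * ?V"
    by (simp add: algebra_simps)
  finally show ?case .
qed

lemma clip_small: "norm v \<le> C \<Longrightarrow> clip v C = v"
  unfolding clip_def by (cases "v = 0") (auto simp: min_def field_simps)

lemma clip_big: assumes "C < norm v" shows "clip v C = (C / norm v) *\<^sub>R v"
proof (cases "v = 0")
  case False
  then have "norm v > 0" by simp
  then have "C / norm v < 1" using assms by (simp add: divide_less_eq)
  then show ?thesis unfolding clip_def by (simp add: min_def)
qed (simp add: clip_def)

lemma clip_in: assumes "0 < C" shows "clip v C \<in> cball 0 C"
proof (cases "norm v \<le> C")
  case True then show ?thesis by (simp add: clip_small)
next
  case False then show ?thesis using assms by (simp add: clip_big)
qed

lemma clip_closest: assumes "0 < C" shows "clip v C = closest_point (cball 0 C) v"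
proof (rule closest_point_unique)
  show "convex (cball (0::real^'a) C)" "closed (cball (0::real^'a) C)" by auto
  show "clip v C \<in> cball 0 C" using clip_in[OF assms] .
  show "\<forall>z\<in>cball 0 C. dist v (clip v C) \<le> dist v z"
  proof
    fix z assume z: "z \<in> cball (0::real^'a) C"
    show "dist v (clip v C) \<le> dist v z"
    proof (cases "norm v \<le> C")
      case True then show ?thesis by (simp add: clip_small)
    next
      case False
      then have nv: "norm v > 0" using assms by auto
      have "v - (C / norm v) *\<^sub>R v = (1 - C / norm v) *\<^sub>R v" by (simp add: algebra_simps)
      then have "dist v (clip v C) = (1 - C / norm v) * norm v"
        using False nv by (simp add: clip_big dist_norm)
      also have "\<dots> = norm v - C" using nv by (simp add: field_simps)
      also have "\<dots> \<le> norm v - norm z" using z by simp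
      also have "\<dots> \<le> dist v z" by (simp add: dist_norm norm_triangle_ineq2)
      finally show ?thesis .
    qed
  qed
qed

lemma clip_nonexp: assumes "0 < C" shows "norm (clip v C - clip w C) \<le> norm (v - w)"
  using closest_point_lipschitz[of "cball (0::real^'a) C" v w] assms
  by (simp add: clip_closest dist_norm)

lemma tri3: "norm (X + Y - Z :: real^'d) \<le> norm X + norm Y + norm Z"
  using norm_triangle_ineq4[of "X+Y" Z] norm_triangle_ineq[of X Y] by linarith

definition Kc :: "real \<Rightarrow> real \<Rightarrow> real" where
  "Kc \<kappa> \<gamma> = (if -1 < \<gamma> \<and> \<gamma> < 0 then 2 + \<kappa> else 2 / \<bar>\<gamma>\<bar>)"

lemma sample_bound:
  fixes w p q :: "real^'d" and \<kappa> \<gamma> C G s :: real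
  assumes k0: "0 < \<kappa>" and k1: "\<kappa> \<le> 1" and g0: "\<gamma> \<noteq> 0" and Cpos: "C > 0"
    and Cbig: "C \<ge> (1 + 2*(1-\<kappa>)/\<kappa>) * G"
    and nw: "norm w \<le> G" and np: "norm p \<le> G" and nq: "norm q \<le> G"
    and wp: "norm (w - p) \<le> s" and qw: "norm (q - w) \<le> \<bar>\<gamma>\<bar> * s" and pq: "norm (p - q) \<le> \<bar>1+\<gamma>\<bar> * s"
  shows "norm (w - (1-\<kappa>) *\<^sub>R p - \<kappa> *\<^sub>R clip (((1-\<kappa>)/(\<kappa>*\<gamma>)) *\<^sub>R q + (1 - (1-\<kappa>)/(\<kappa>*\<gamma>)) *\<^sub>R w) C)
         \<le> (1-\<kappa>) * Kc \<kappa> \<gamma> * \<bar>1+\<gamma>\<bar> * s"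
proof -
  define a where "a = (1-\<kappa>)/(\<kappa>*\<gamma>)"
  define z where "z = a *\<^sub>R q + (1 - a) *\<^sub>R w"
  define e where "e = \<bar>1+\<gamma>\<bar>"
  define D where "D = norm (q - w)"
  have z_eq: "z = w + a *\<^sub>R (q - w)" unfolding z_def by (simp add: algebra_simps)
  have ka: "\<kappa> * a = (1-\<kappa>)/\<gamma>" unfolding a_def using k0 g0 by (simp add: field_simps)
  have kabs: "\<kappa> * \<bar>a\<bar> = (1-\<kappa>)/\<bar>\<gamma>\<bar>" proof -
    have "\<kappa> * \<bar>a\<bar> = \<bar>\<kappa> * a\<bar>" using k0 by (simp add: abs_mult)
    then show ?thesis using ka k1 by (simp add: abs_divide)
  qed
  have agam: "\<bar>a\<bar> * \<bar>\<gamma>\<bar> = (1-\<kappa>)/\<kappa>" unfolding a_def using k0 k1 g0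
    by (simp add: abs_divide abs_mult)
  have G0: "G \<ge> 0" using nw norm_ge_zero order_trans by blast
  have s0: "s \<ge> 0" using wp norm_ge_zero order_trans by blast
  have D2G: "D \<le> 2 * G" unfolding D_def using norm_triangle_ineq4[of q w] nw nq by simp
  have Ds: "D \<le> \<bar>\<gamma>\<bar> * s" unfolding D_def using qw .
  have D0: "0 \<le> D" unfolding D_def by simp
  have nz: "norm z \<le> G + \<bar>a\<bar> * D"
    unfolding z_eq D_def using norm_triangle_ineq[of w "a *\<^sub>R (q - w)"] nw by simp
  have CG: "C \<ge> G + 2 * (\<bar>a\<bar> * \<bar>\<gamma>\<bar>) * G" using Cbig agam by (simp add: algebra_simps)
  have excess: "\<kappa> * norm (clip z C - z) \<le> (1-\<kappa>)/\<bar>\<gamma>\<bar> * max 0 (D - 2*\<bar>\<gamma>\<bar>*G)"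
  proof (cases "norm z \<le> C")
    case True then show ?thesis using k1 by (simp add: clip_small)
  next
    case False
    then have nzp: "norm z > 0" using Cpos by linarith
    have "clip z C - z = (C / norm z - 1) *\<^sub>R z" using False by (simp add: clip_big algebra_simps)
    then have "norm (clip z C - z) = \<bar>C / norm z - 1\<bar> * norm z" by simp
    also have "\<bar>C / norm z - 1\<bar> = 1 - C / norm z" using False nzp by (simp add: field_simps)
    also have "(1 - C / norm z) * norm z = norm z - C" using nzp by (simp add: field_simps)
    finally have "norm (clip z C - z) = norm z - C" .
    also have "\<dots> \<le> \<bar>a\<bar> * (D - 2*\<bar>\<gamma>\<bar>*G)" using nz CG by (simp add: algebra_simps)
    finally have "\<kappa> * norm (clip z C - z) \<le> \<kappa> * \<bar>a\<bar> * (D - 2*\<bar>\<gamma>\<bar>*G)"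
      using k0 by (simp add: mult_left_mono)
    also have "\<dots> \<le> \<kappa> * \<bar>a\<bar> * max 0 (D - 2*\<bar>\<gamma>\<bar>*G)"
      using k0 by (intro mult_left_mono) auto
    finally show ?thesis using kabs by simp
  qed
  show ?thesis
  proof (cases "-1 < \<gamma> \<and> \<gamma> < 0")
    case False
    define c1 where "c1 = (1-\<kappa>) + \<kappa> * a"
    have c1: "\<bar>c1\<bar> = (1-\<kappa>)/\<bar>\<gamma>\<bar> * e"
    proof -
      have "c1 = (1-\<kappa>) * (1+\<gamma>) / \<gamma>" unfolding c1_def ka using g0 by (simp add: field_simps)
      then show ?thesis using k1 unfolding e_def by (simp add: abs_mult abs_divide)
    qed
    have ident: "w - (1-\<kappa>) *\<^sub>R p - \<kappa> *\<^sub>R clip z C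
        = c1 *\<^sub>R (w - p) + (\<kappa> * a) *\<^sub>R (p - q) - \<kappa> *\<^sub>R (clip z C - z)"
      unfolding c1_def z_eq by (simp add: algebra_simps)
    have "norm (w - (1-\<kappa>) *\<^sub>R p - \<kappa> *\<^sub>R clip z C)
        \<le> \<bar>c1\<bar> * norm (w - p) + \<bar>\<kappa> * a\<bar> * norm (p - q) + \<kappa> * norm (clip z C - z)"
      unfolding ident using k0 tri3[of "c1 *\<^sub>R (w - p)" "(\<kappa> * a) *\<^sub>R (p - q)" "\<kappa> *\<^sub>R (clip z C - z)"]
      by simp
    also have "\<dots> \<le> (1-\<kappa>)/\<bar>\<gamma>\<bar> * (e * norm (w - p) + norm (p - q) + max 0 (D - 2*\<bar>\<gamma>\<bar>*G))"
      using excess c1 kabs k0 by (simp add: abs_mult algebra_simps)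
    also have "\<dots> \<le> (1-\<kappa>)/\<bar>\<gamma>\<bar> * (2 * e * s)"
    proof (intro mult_left_mono)
      show "0 \<le> (1-\<kappa>)/\<bar>\<gamma>\<bar>" using k1 by simp
      have e0: "e \<ge> 0" unfolding e_def by simp
      have wp2: "norm (w - p) \<le> 2 * G" using norm_triangle_ineq4[of w p] nw np by simp
      show "e * norm (w - p) + norm (p - q) + max 0 (D - 2*\<bar>\<gamma>\<bar>*G) \<le> 2 * e * s"
      proof (cases "s \<le> 2 * G")
        case True
        have "D - 2*\<bar>\<gamma>\<bar>*G \<le> 0" using Ds True mult_left_mono[OF True, of "\<bar>\<gamma>\<bar>"] by simp
        then have "max 0 (D - 2*\<bar>\<gamma>\<bar>*G) = 0" by simp
        moreover have "e * norm (w - p) \<le> e * s" using wp e0 by (simp add: mult_left_mono)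
        ultimately show ?thesis using pq unfolding e_def by simp
      next
        case sbig: False
        have "e * norm (w - p) \<le> e * (2*G)" using wp2 e0 by (simp add: mult_left_mono)
        moreover have "max 0 (D - 2*\<bar>\<gamma>\<bar>*G) \<le> e * (s - 2*G)"
        proof (cases "\<gamma> > 0")
          case True
          then have "D - 2*\<bar>\<gamma>\<bar>*G \<le> \<bar>\<gamma>\<bar> * (s - 2*G)" using Ds by (simp add: algebra_simps)
          also have "\<dots> \<le> e * (s - 2*G)" using True sbig unfolding e_def by (intro mult_right_mono) auto
          finally show ?thesis using sbig e0 by simp
        next
          case gneg: False
          then have "\<gamma> \<le> -1" using False g0 by auto
          then have "1 * (2*G) \<le> \<bar>\<gamma>\<bar> * (2*G)" using G0 by (intro mult_right_mono) auto
          then have "D - 2*\<bar>\<gamma>\<bar>*G \<le> 0" using D2G by (simp add: algebra_simps)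
          then show ?thesis using sbig e0 by simp
        qed
        ultimately show ?thesis using pq unfolding e_def by (simp add: algebra_simps)
      qed
    qed
    also have "\<dots> = (1-\<kappa>) * Kc \<kappa> \<gamma> * \<bar>1+\<gamma>\<bar> * s"
    proof -
      have KcF: "Kc \<kappa> \<gamma> = 2 / \<bar>\<gamma>\<bar>" unfolding Kc_def by (rule if_not_P[OF False])
      show ?thesis unfolding KcF e_def by simp
    qed
    finally show ?thesis unfolding z_def a_def .
  next
    case True
    define g where "g = - \<gamma>"
    have g01: "0 < g" "g < 1" using True unfolding g_def by auto
    have eg: "e = 1 - g" unfolding e_def g_def using True by simp
    have Dg: "D \<le> g * s" using Ds g01 unfolding g_def by simp
    have gabs: "\<bar>\<gamma>\<bar> = g" using g01 unfolding g_def by simp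
    have kag: "\<kappa> * a = - (1-\<kappa>)/g" unfolding ka g_def using g0 by (simp add: field_simps)
    have agam': "\<bar>a\<bar> * g = (1-\<kappa>)/\<kappa>" using agam g01 unfolding g_def by simp
    have T: "norm (w - (1-\<kappa>) *\<^sub>R q - \<kappa> *\<^sub>R clip z C) \<le> (1-\<kappa>) * e * s + \<kappa> * (1-\<kappa>) * e * s"
    proof (cases "norm z \<le> C")
      case True
      have "w - (1-\<kappa>) *\<^sub>R q - \<kappa> *\<^sub>R clip z C = (- (1-\<kappa>) - \<kappa> * a) *\<^sub>R (q - w)"
        using True by (simp add: clip_small z_eq algebra_simps)
      also have "- (1-\<kappa>) - \<kappa> * a = (1-\<kappa>) * e / g" unfolding kag eg using g01 by (simp add: field_simps)
      finally have "norm (w - (1-\<kappa>) *\<^sub>R q - \<kappa> *\<^sub>R clip z C) = (1-\<kappa>) * e / g * D"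
        unfolding D_def using k1 g01 eg by simp
      also have "\<dots> \<le> (1-\<kappa>) * e / g * (g * s)"
      proof (rule mult_left_mono)
        show "D \<le> g * s" using Ds g01 unfolding g_def by simp
        show "0 \<le> (1-\<kappa>) * e / g" using k1 g01 eg by simp
      qed
      also have "\<dots> = (1-\<kappa>) * e * s" using g01 by simp
      moreover have "0 \<le> \<kappa> * (1-\<kappa>) * e * s" using k0 k1 s0 eg g01 by simp
      ultimately show ?thesis by linarith
    next
      case False
      then have nzp: "norm z > 0" using Cpos by linarith
      define \<theta> where "\<theta> = C / norm z"
      have th1: "\<theta> \<le> 1" using False nzp unfolding \<theta>_def by (simp add: field_simps)
      have "g * norm z \<le> g * (G + \<bar>a\<bar> * D)" using nz g01 by (simp add: mult_left_mono)
      also have "\<dots> \<le> g * (G + \<bar>a\<bar> * (2 * G))"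
        using mult_left_mono[OF D2G, of "\<bar>a\<bar>"] g01 by (intro mult_left_mono) auto
      also have "\<dots> = g * G + \<bar>a\<bar> * g * (2 * G)" by (simp add: algebra_simps)
      also have "\<dots> \<le> G + 2 * (\<bar>a\<bar> * \<bar>\<gamma>\<bar>) * G"
      proof -
        have "g * G \<le> 1 * G" using g01 G0 by (intro mult_right_mono) auto
        moreover have "\<bar>\<gamma>\<bar> = g" using g01 unfolding g_def by simp
        ultimately show ?thesis by (simp add: algebra_simps)
      qed
      also have "\<dots> \<le> C" using CG .
      finally have thg: "g \<le> \<theta>" unfolding \<theta>_def using nzp by (simp add: field_simps)
      have cl: "clip z C = \<theta> *\<^sub>R z" using False unfolding \<theta>_def by (simp add: clip_big)
      have "w - (1-\<kappa>) *\<^sub>R q - \<kappa> *\<^sub>R clip z C = (- (1-\<kappa>) - \<theta> * (\<kappa> * a)) *\<^sub>R (q - w) + (\<kappa> * (1 - \<theta>)) *\<^sub>R w"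
        by (subst cl) (simp add: z_eq algebra_simps)
      also have "- (1-\<kappa>) - \<theta> * (\<kappa> * a) = (1-\<kappa>) * (\<theta> - g) / g" unfolding kag using g01 by (simp add: field_simps)
      finally have "norm (w - (1-\<kappa>) *\<^sub>R q - \<kappa> *\<^sub>R clip z C) \<le> \<bar>(1-\<kappa>) * (\<theta> - g) / g\<bar> * D + \<bar>\<kappa> * (1 - \<theta>)\<bar> * norm w"
        unfolding D_def using norm_triangle_ineq[of "((1-\<kappa>) * (\<theta> - g) / g) *\<^sub>R (q - w)" "(\<kappa> * (1 - \<theta>)) *\<^sub>R w"] by simp
      also have "\<bar>(1-\<kappa>) * (\<theta> - g) / g\<bar> = (1-\<kappa>) * (\<theta> - g) / g" using k1 thg g01 by simp
      also have "\<bar>\<kappa> * (1 - \<theta>)\<bar> = \<kappa> * (1 - \<theta>)" using k0 th1 by simp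
      also have "(1-\<kappa>) * (\<theta> - g) / g * D \<le> (1-\<kappa>) * e * s"
      proof -
        have "(1-\<kappa>) * (\<theta> - g) / g * D \<le> (1-\<kappa>) * (1 - g) / g * D"
          using k1 th1 g01 D0 by (intro mult_right_mono divide_right_mono mult_left_mono) auto
        also have "\<dots> \<le> (1-\<kappa>) * (1 - g) / g * (g * s)"
          using Dg k1 g01 by (intro mult_left_mono) auto
        also have "\<dots> = (1-\<kappa>) * e * s" using g01 eg by simp
        finally show ?thesis .
      qed
      also have "\<kappa> * (1 - \<theta>) * norm w \<le> \<kappa> * (1-\<kappa>) * e * s"
      proof -
        have ex: "(1 - \<theta>) * norm z = norm z - C" unfolding \<theta>_def using nzp by (simp add: field_simps)
        have "norm z - C \<le> \<bar>a\<bar> * (D - 2*g*G)" using nz CG gabs by (simp add: algebra_simps)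
        also have "\<dots> \<le> \<bar>a\<bar> * (e * D)"
        proof (intro mult_left_mono)
          have "g * D \<le> g * (2 * G)" using D2G g01 by (simp add: mult_left_mono)
          then show "D - 2*g*G \<le> e * D" unfolding eg by (simp add: algebra_simps)
        qed simp
        also have "\<dots> \<le> \<bar>a\<bar> * (e * (g * s))"
          using Dg eg g01 by (intro mult_left_mono) auto
        also have "\<dots> = (1-\<kappa>)/\<kappa> * e * s"
        proof -
          have "\<bar>a\<bar> * (e * (g * s)) = (\<bar>a\<bar> * g) * e * s" by (simp add: algebra_simps)
          then show ?thesis using agam' by simp
        qed
        finally have A: "(1 - \<theta>) * norm z \<le> (1-\<kappa>)/\<kappa> * e * s" using ex by simp
        have GC: "G \<le> \<kappa> * C"
        proof -
          have "G \<le> (1 + 2*(1-\<kappa>)/\<kappa>) * G * \<kappa>"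
          proof -
            have "(1 + 2*(1-\<kappa>)/\<kappa>) * G * \<kappa> = (2 - \<kappa>) * G" using k0 by (simp add: field_simps)
            moreover have "1 * G \<le> (2 - \<kappa>) * G" using k1 G0 by (intro mult_right_mono) auto
            ultimately show ?thesis by linarith
          qed
          also have "\<dots> \<le> C * \<kappa>" using Cbig k0 by (simp add: mult_right_mono)
          finally show ?thesis by (simp add: mult.commute)
        qed
        have "\<kappa> * (1 - \<theta>) * norm w * norm z \<le> \<kappa> * (1 - \<theta>) * G * norm z"
          using nw k0 th1 nzp by (intro mult_right_mono mult_left_mono) auto
        also have "\<dots> = G * (\<kappa> * ((1 - \<theta>) * norm z))" by (simp add: algebra_simps)
        also have "\<dots> \<le> G * (\<kappa> * ((1-\<kappa>)/\<kappa> * e * s))"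
          using A k0 G0 by (intro mult_left_mono) auto
        also have "\<dots> = G * ((1-\<kappa>) * e * s)" using k0 by simp
        also have "\<dots> \<le> (\<kappa> * C) * ((1-\<kappa>) * e * s)"
          using GC k1 s0 eg g01 by (intro mult_right_mono) auto
        also have "\<dots> \<le> (\<kappa> * norm z) * ((1-\<kappa>) * e * s)"
          using False k0 k1 s0 eg g01 by (intro mult_right_mono mult_left_mono) auto
        finally have "\<kappa> * (1 - \<theta>) * norm w * norm z \<le> \<kappa> * (1-\<kappa>) * e * s * norm z"
          by (simp add: algebra_simps)
        then show ?thesis using nzp by (rule mult_right_le_imp_le)
      qed
      finally show ?thesis by simp
    qed
    have "norm (w - (1-\<kappa>) *\<^sub>R p - \<kappa> *\<^sub>R clip z C) \<le> norm ((1-\<kappa>) *\<^sub>R (q - p)) + norm (w - (1-\<kappa>) *\<^sub>R q - \<kappa> *\<^sub>R clip z C)"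
      by (rule order_trans[OF _ norm_triangle_ineq]) (simp add: algebra_simps)
    also have "norm ((1-\<kappa>) *\<^sub>R (q - p)) \<le> (1-\<kappa>) * (e * s)"
      using pq k1 unfolding e_def by (simp add: norm_minus_commute mult_left_mono)
    finally have "norm (w - (1-\<kappa>) *\<^sub>R p - \<kappa> *\<^sub>R clip z C) \<le> (1-\<kappa>) * (2 + \<kappa>) * e * s"
      using T by (simp add: algebra_simps)
    moreover have "Kc \<kappa> \<gamma> = 2 + \<kappa>" unfolding Kc_def by (rule if_P[OF True])
    ultimately show ?thesis unfolding e_def z_def a_def by (simp add: algebra_simps)
  qed
qed

lemma amgm_aux:
  fixes e k h K P Q :: real
  assumes "0 < k" "0 \<le> e"
  shows "2*K*e*h*P*Q \<le> e*k/2*P\<^sup>2 + 2*K\<^sup>2*e*h\<^sup>2/k*Q\<^sup>2"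
proof -
  have "0 \<le> e * (k*P - 2*K*h*Q)\<^sup>2 / (2*k)" using assms by simp
  also have "e * (k*P - 2*K*h*Q)\<^sup>2 / (2*k) = e*k/2*P\<^sup>2 + 2*K\<^sup>2*e*h\<^sup>2/k*Q\<^sup>2 - 2*K*e*h*P*Q"
    using assms by (simp add: field_simps power2_eq_square)
  finally show ?thesis by simp
qed

lemma main_quad:
  fixes e k h K P Q M :: real
  assumes k: "0 < k" and e: "0 \<le> e" and P: "0 \<le> P" and Q: "0 \<le> Q" and h: "0 \<le> h" and K: "0 \<le> K"
    and KM: "K\<^sup>2 * (1/k + e) \<le> M"
  shows "(P + K*e*h*(P+Q))\<^sup>2 \<le> (1 + e*k)*P\<^sup>2 + 2*e*h\<^sup>2*M*(P\<^sup>2+Q\<^sup>2)"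
proof -
  have i: "2*K*e*h*P*P \<le> e*k/2*P\<^sup>2 + 2*K\<^sup>2*e*h\<^sup>2/k*P\<^sup>2" using amgm_aux[OF k e, of K h P P] .
  have ii: "2*K*e*h*P*Q \<le> e*k/2*P\<^sup>2 + 2*K\<^sup>2*e*h\<^sup>2/k*Q\<^sup>2" using amgm_aux[OF k e, of K h P Q] .
  have iii: "(K*e*h*(P+Q))\<^sup>2 \<le> 2*K\<^sup>2*e\<^sup>2*h\<^sup>2*(P\<^sup>2+Q\<^sup>2)"
  proof -
    have "(P+Q)\<^sup>2 \<le> 2*(P\<^sup>2+Q\<^sup>2)" using sum_squares_bound[of P Q] by (simp add: power2_eq_square algebra_simps)
    then have "(K*e*h)\<^sup>2 * (P+Q)\<^sup>2 \<le> (K*e*h)\<^sup>2 * (2*(P\<^sup>2+Q\<^sup>2))" by (simp add: mult_left_mono)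
    moreover have "(K*e*h*(P+Q))\<^sup>2 = (K*e*h)\<^sup>2 * (P+Q)\<^sup>2" by (simp only: power_mult_distrib)
    moreover have "(K*e*h)\<^sup>2 * (2*(P\<^sup>2+Q\<^sup>2)) = 2*K\<^sup>2*e\<^sup>2*h\<^sup>2*(P\<^sup>2+Q\<^sup>2)" by (simp add: power_mult_distrib)
    ultimately show ?thesis by simp
  qed
  have expand: "(P + K*e*h*(P+Q))\<^sup>2 = P\<^sup>2 + 2*K*e*h*P*P + 2*K*e*h*P*Q + (K*e*h*(P+Q))\<^sup>2"
    by (simp add: power2_eq_square algebra_simps)
  have "(P + K*e*h*(P+Q))\<^sup>2 \<le> P\<^sup>2 + e*k*P\<^sup>2 + 2*e*h\<^sup>2*(K\<^sup>2*(1/k + e))*(P\<^sup>2+Q\<^sup>2)"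
  proof -
    have R: "2*e*h\<^sup>2*(K\<^sup>2*(1/k + e))*(P\<^sup>2+Q\<^sup>2) = 2*K\<^sup>2*e*h\<^sup>2/k*P\<^sup>2 + 2*K\<^sup>2*e*h\<^sup>2/k*Q\<^sup>2 + 2*K\<^sup>2*e\<^sup>2*h\<^sup>2*(P\<^sup>2+Q\<^sup>2)"
      using k by (simp add: field_simps power2_eq_square)
    have R2: "e*k/2*P\<^sup>2 + e*k/2*P\<^sup>2 = e*k*P\<^sup>2" by simp
    show ?thesis unfolding expand R using i ii iii R2 by linarith
  qed
  also have "\<dots> \<le> P\<^sup>2 + e*k*P\<^sup>2 + 2*e*h\<^sup>2*M*(P\<^sup>2+Q\<^sup>2)"
    using KM e h by (intro add_left_mono mult_right_mono mult_left_mono) auto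
  finally show ?thesis by (simp add: algebra_simps)
qed

lemma Kc_nonneg: "0 < \<kappa> \<Longrightarrow> 0 \<le> Kc \<kappa> \<gamma>"
  unfolding Kc_def by auto

lemma Kc_cond:
  fixes \<kappa> \<gamma> :: real
  assumes k0: "0 < \<kappa>" and k1: "\<kappa> \<le> 1" and g0: "\<gamma> \<noteq> 0"
  shows "(Kc \<kappa> \<gamma>)\<^sup>2 * (1/\<kappa> + \<bar>1+\<gamma>\<bar>) \<le> 1 + 4 * (2 + 1/\<kappa> + \<bar>1+\<gamma>\<bar>) / \<gamma>\<^sup>2"
proof (cases "-1 < \<gamma> \<and> \<gamma> < 0")
  case False
  have KcF: "Kc \<kappa> \<gamma> = 2 / \<bar>\<gamma>\<bar>" unfolding Kc_def by (rule if_not_P[OF False])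
  have "(Kc \<kappa> \<gamma>)\<^sup>2 * (1/\<kappa> + \<bar>1+\<gamma>\<bar>) = 4 * (1/\<kappa> + \<bar>1+\<gamma>\<bar>) / \<gamma>\<^sup>2"
    unfolding KcF by (simp add: power_divide)
  also have "\<dots> \<le> 4 * (2 + 1/\<kappa> + \<bar>1+\<gamma>\<bar>) / \<gamma>\<^sup>2"
    by (intro divide_right_mono mult_left_mono) auto
  finally show ?thesis by simp
next
  case True
  define g where "g = - \<gamma>"
  define e where "e = \<bar>1+\<gamma>\<bar>"
  have g01: "0 < g" "g < 1" using True unfolding g_def by auto
  have eg: "e = 1 - g" unfolding e_def g_def using True by simp
  have KcT: "Kc \<kappa> \<gamma> = 2 + \<kappa>" unfolding Kc_def by (rule if_P[OF True])
  have gg: "\<gamma>\<^sup>2 = g\<^sup>2" unfolding g_def by simp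
  have s1: "(2+\<kappa>)\<^sup>2 \<le> 4 + 5*\<kappa>"
  proof -
    have "\<kappa> * \<kappa> \<le> \<kappa> * 1" using k0 k1 by (intro mult_left_mono) auto
    then show ?thesis by (simp add: power2_eq_square algebra_simps)
  qed
  have ke: "0 \<le> 1/\<kappa> + e" using k0 unfolding e_def by simp
  have s2: "(2+\<kappa>)\<^sup>2 * (1/\<kappa> + e) \<le> (4 + 5*\<kappa>) * (1/\<kappa> + e)"
    using s1 ke by (rule mult_right_mono)
  have s2': "(4 + 5*\<kappa>) * (1/\<kappa> + e) = 4/\<kappa> + 4*e + 5 + 5*(\<kappa>*e)"
    using k0 by (simp add: field_simps)
  have ke1: "\<kappa> * e \<le> e"
  proof -
    have "\<kappa> * e \<le> 1 * e" using k1 eg g01 by (intro mult_right_mono) auto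
    then show ?thesis by simp
  qed
  have e01: "0 \<le> e" "e \<le> 1" using eg g01 by auto
  have s3: "1 + e \<le> 1 / g\<^sup>2"
  proof -
    have "g\<^sup>2 * (1 + e) = g\<^sup>2 * (2 - g)" using eg by simp
    also have "\<dots> \<le> 1"
    proof -
      have "0 \<le> (1 - g) * (1 + g - g\<^sup>2)"
      proof (intro mult_nonneg_nonneg)
        show "0 \<le> 1 - g" using g01 by simp
        have "g\<^sup>2 \<le> g" using g01 by (simp add: power2_eq_square mult_left_le)
        then show "0 \<le> 1 + g - g\<^sup>2" using g01 by simp
      qed
      then show ?thesis by (simp add: power2_eq_square algebra_simps)
    qed
    finally show ?thesis using g01 by (simp add: field_simps)
  qed
  have c0: "0 \<le> 4 * (2 + 1/\<kappa> + e)" using k0 e01 by simp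
  have s4: "4 * (2 + 1/\<kappa> + e) * (1 + e) \<le> 4 * (2 + 1/\<kappa> + e) * (1 / g\<^sup>2)"
    using s3 c0 by (rule mult_left_mono)
  have s4': "4 * (2 + 1/\<kappa> + e) * (1 + e) = 8 + 4/\<kappa> + 4*e + 8*e + 4*(e/\<kappa>) + 4*e\<^sup>2"
    by (simp add: algebra_simps power2_eq_square add_divide_distrib)
  have pos: "0 \<le> e/\<kappa>" "0 \<le> e\<^sup>2" using e01 k0 by auto
  have "(Kc \<kappa> \<gamma>)\<^sup>2 * (1/\<kappa> + \<bar>1+\<gamma>\<bar>) = (2+\<kappa>)\<^sup>2 * (1/\<kappa> + e)" unfolding KcT e_def ..
  also have "\<dots> \<le> 1 + 4 * (2 + 1/\<kappa> + e) * (1 / g\<^sup>2)"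
    using s2 s2' s4 s4' ke1 pos e01 by linarith
  also have "\<dots> = 1 + 4 * (2 + 1/\<kappa> + \<bar>1+\<gamma>\<bar>) / \<gamma>\<^sup>2" unfolding gg e_def by simp
  finally show ?thesis .
qed

lemma final_alg:
  fixes \<kappa> e h K P Q r M nm VB \<sigma>2 B cd :: real
  assumes k0: "0 < \<kappa>" and k1: "\<kappa> \<le> 1" and e0: "0 \<le> e" and h0: "0 \<le> h" and K0: "0 \<le> K"
    and P0: "0 \<le> P" and Q0: "0 \<le> Q" and r0: "0 \<le> r" and rPQ: "r \<le> P + Q" and B1: "1 \<le> B"
    and nm0: "0 \<le> nm" and nm: "nm \<le> (1-\<kappa>)*P + (1-\<kappa>)*K*e*h*r"
    and VB: "VB \<le> ((2+e)*\<kappa>\<^sup>2*\<sigma>2 + 2*(1-\<kappa>)\<^sup>2*h\<^sup>2*r\<^sup>2)/B"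
    and KM: "K\<^sup>2*(1/\<kappa>+e) \<le> M" and s0: "0 \<le> \<sigma>2"
  shows "nm\<^sup>2 + VB + \<kappa>\<^sup>2*cd \<le> (1-\<kappa>)\<^sup>2*(1 + 4*h\<^sup>2 + e*(\<kappa> + 2*h\<^sup>2*M))*P\<^sup>2
            + 2*h\<^sup>2*(1-\<kappa>)\<^sup>2*(2 + e*M)*Q\<^sup>2 + \<kappa>\<^sup>2*((2+e)*\<sigma>2/B + cd)"
proof -
  have c1: "0 \<le> (1-\<kappa>)*K*e*h" using k1 K0 e0 h0 by simp
  have a: "nm \<le> (1-\<kappa>)*(P + K*e*h*(P+Q))"
  proof -
    have "(1-\<kappa>)*K*e*h*r \<le> (1-\<kappa>)*K*e*h*(P+Q)" using rPQ c1 by (rule mult_left_mono)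
    then show ?thesis using nm by (simp add: algebra_simps)
  qed
  have b: "nm\<^sup>2 \<le> ((1-\<kappa>)*(P + K*e*h*(P+Q)))\<^sup>2" using a nm0 by (rule power_mono)
  have c: "(P + K*e*h*(P+Q))\<^sup>2 \<le> (1 + e*\<kappa>)*P\<^sup>2 + 2*e*h\<^sup>2*M*(P\<^sup>2+Q\<^sup>2)"
    using main_quad[OF k0 e0 P0 Q0 h0 K0 KM] .
  have c': "(1-\<kappa>)\<^sup>2 * (P + K*e*h*(P+Q))\<^sup>2 \<le> (1-\<kappa>)\<^sup>2 * ((1 + e*\<kappa>)*P\<^sup>2 + 2*e*h\<^sup>2*M*(P\<^sup>2+Q\<^sup>2))"
    using c by (rule mult_left_mono) simp
  have b': "((1-\<kappa>)*(P + K*e*h*(P+Q)))\<^sup>2 = (1-\<kappa>)\<^sup>2 * (P + K*e*h*(P+Q))\<^sup>2" by (simp add: power_mult_distrib)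
  have X0: "0 \<le> 2*(1-\<kappa>)\<^sup>2*h\<^sup>2*r\<^sup>2" by simp
  have d: "2*(1-\<kappa>)\<^sup>2*h\<^sup>2*r\<^sup>2 / B \<le> 2*(1-\<kappa>)\<^sup>2*h\<^sup>2*r\<^sup>2"
  proof -
    have "2*(1-\<kappa>)\<^sup>2*h\<^sup>2*r\<^sup>2 * 1 \<le> 2*(1-\<kappa>)\<^sup>2*h\<^sup>2*r\<^sup>2 * B" using B1 X0 by (rule mult_left_mono)
    then show ?thesis using B1 by (simp add: divide_le_eq)
  qed
  have VB': "VB \<le> (2+e)*\<kappa>\<^sup>2*\<sigma>2/B + 2*(1-\<kappa>)\<^sup>2*h\<^sup>2*r\<^sup>2"
    using VB d by (simp add: add_divide_distrib)
  have e2: "r\<^sup>2 \<le> 2*(P\<^sup>2+Q\<^sup>2)"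
  proof -
    have "r\<^sup>2 \<le> (P+Q)\<^sup>2" using rPQ r0 by (rule power_mono)
    also have "\<dots> \<le> 2*(P\<^sup>2+Q\<^sup>2)" using sum_squares_bound[of P Q] by (simp add: power2_eq_square algebra_simps)
    finally show ?thesis .
  qed
  have d': "2*(1-\<kappa>)\<^sup>2*h\<^sup>2*r\<^sup>2 \<le> 2*(1-\<kappa>)\<^sup>2*h\<^sup>2*(2*(P\<^sup>2+Q\<^sup>2))"
    using e2 by (intro mult_left_mono) auto
  have RHS: "(1-\<kappa>)\<^sup>2*(1 + 4*h\<^sup>2 + e*(\<kappa> + 2*h\<^sup>2*M))*P\<^sup>2 + 2*h\<^sup>2*(1-\<kappa>)\<^sup>2*(2 + e*M)*Q\<^sup>2 + \<kappa>\<^sup>2*((2+e)*\<sigma>2/B + cd)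
     = (1-\<kappa>)\<^sup>2 * ((1 + e*\<kappa>)*P\<^sup>2 + 2*e*h\<^sup>2*M*(P\<^sup>2+Q\<^sup>2)) + 2*(1-\<kappa>)\<^sup>2*h\<^sup>2*(2*(P\<^sup>2+Q\<^sup>2))
       + (2+e)*\<kappa>\<^sup>2*\<sigma>2/B + \<kappa>\<^sup>2*cd"
    by (simp add: algebra_simps)
  show ?thesis unfolding RHS using b b' c' VB' d' by linarith
qed

lemma GF_avg:
  fixes f :: "nat \<Rightarrow> real ^ 'd \<Rightarrow> real" and gf :: "nat \<Rightarrow> real ^ 'd \<Rightarrow> real ^ 'd"
    and F :: "real ^ 'd \<Rightarrow> real" and GF :: "real ^ 'd \<Rightarrow> real ^ 'd"
  assumes grad_f: "\<And>i x. i < N \<Longrightarrow> (f i has_derivative (\<lambda>h. gf i x \<bullet> h)) (at x)"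
    and F_def: "\<And>x. F x = (\<Sum>i<N. f i x) / real N"
    and grad_F: "\<And>x. (F has_derivative (\<lambda>h. GF x \<bullet> h)) (at x)"
  shows "GF x = (1 / real N) *\<^sub>R (\<Sum>i<N. gf i x)"
proof -
  define A where "A = (1 / real N) *\<^sub>R (\<Sum>i<N. gf i x)"
  have Fe: "F = (\<lambda>y. (\<Sum>i<N. f i y) * (1 / real N))" using F_def by (auto simp: fun_eq_iff)
  have d1: "((\<lambda>y. (\<Sum>i<N. f i y) * (1 / real N)) has_derivative (\<lambda>h. (\<Sum>i<N. gf i x \<bullet> h) * (1 / real N))) (at x)"
    by (intro has_derivative_mult_left has_derivative_sum grad_f) simp
  have "(\<lambda>h. GF x \<bullet> h) = (\<lambda>h. (\<Sum>i<N. gf i x \<bullet> h) * (1 / real N))"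
    using has_derivative_unique[OF grad_F[of x] d1[folded Fe]] .
  then have eq: "\<And>h. GF x \<bullet> h = A \<bullet> h"
    unfolding A_def by (simp add: fun_eq_iff inner_sum_left)
  have "(GF x - A) \<bullet> (GF x - A) = 0" using eq[of "GF x - A"] by (simp add: inner_diff_left)
  then show ?thesis unfolding A_def by simp
qed

lemma sum_list_add_const:
  fixes f :: "nat \<Rightarrow> real^'d"
  shows "(\<Sum>i\<leftarrow>xs. f i + c) = (\<Sum>i\<leftarrow>xs. f i) + real (length xs) *\<^sub>R c"
  by (induction xs) (auto simp: algebra_simps)

lemma var_min:
  fixes u :: "nat \<Rightarrow> real^'d"
  assumes N: "N \<ge> 1"
  shows "(\<Sum>i<N. (norm (u i - (1 / real N) *\<^sub>R (\<Sum>j<N. u j)))\<^sup>2) \<le> (\<Sum>i<N. (norm (u i - c))\<^sup>2)"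
proof -
  define ub where "ub = (1 / real N) *\<^sub>R (\<Sum>j<N. u j)"
  have s0: "(\<Sum>i<N. u i - ub) = 0"
  proof -
    have "(\<Sum>i<N. u i - ub) = (\<Sum>i<N. u i) - real N *\<^sub>R ub" by (simp only: sum_subtractf sum_constant_scaleR card_lessThan)
    also have "real N *\<^sub>R ub = (\<Sum>i<N. u i)" using N unfolding ub_def by simp
    finally show ?thesis by simp
  qed
  have "(\<Sum>i<N. (norm (u i - c))\<^sup>2) = (\<Sum>i<N. (norm ((u i - ub) + (ub - c)))\<^sup>2)" by simp
  also have "\<dots> = (\<Sum>i<N. (norm (u i - ub))\<^sup>2 + 2 * ((u i - ub) \<bullet> (ub - c)) + (norm (ub - c))\<^sup>2)"
    by (simp only: norm_add_sq)
  also have "\<dots> = (\<Sum>i<N. (norm (u i - ub))\<^sup>2) + 2 * ((\<Sum>i<N. u i - ub) \<bullet> (ub - c)) + real N * (norm (ub - c))\<^sup>2"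
    by (simp add: sum.distrib sum_distrib_left inner_sum_left)
  also have "\<dots> \<ge> (\<Sum>i<N. (norm (u i - ub))\<^sup>2)" using s0 by simp
  finally show ?thesis unfolding ub_def .
qed

lemma norm_add_sq_bound:
  fixes \<alpha> \<beta> :: "real^'d" and e :: real
  assumes "0 \<le> e"
  shows "(norm (\<alpha> + \<beta>))\<^sup>2 \<le> (2 + e) * (norm \<alpha>)\<^sup>2 + 2 * (norm \<beta>)\<^sup>2"
proof -
  have "2 * (\<alpha> \<bullet> \<beta>) \<le> (norm \<alpha>)\<^sup>2 + (norm \<beta>)\<^sup>2"
  proof -
    have "0 \<le> (norm (\<alpha> - \<beta>))\<^sup>2" by simp
    then show ?thesis by (simp add: norm_diff_sq)
  qed
  moreover have "0 \<le> e * (norm \<alpha>)\<^sup>2" using assms by simp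
  ultimately show ?thesis by (simp add: norm_add_sq algebra_simps)
qed

theorem lemma1:
  fixes f :: "nat \<Rightarrow> real ^ 'd \<Rightarrow> real"
    and gf :: "nat \<Rightarrow> real ^ 'd \<Rightarrow> real ^ 'd"
    and F :: "real ^ 'd \<Rightarrow> real"
    and GF :: "real ^ 'd \<Rightarrow> real ^ 'd"
    and N B :: nat
    and x0 :: "real ^ 'd"
    and \<eta> \<gamma> \<kappa> C \<sigma>DP \<sigma>SGD L G :: real
    and bs :: "nat \<Rightarrow> nat list" and ws :: "nat \<Rightarrow> real ^ 'd"
    and t :: nat
  assumes N: "N \<ge> 1" and Bpos: "B \<ge> 1"
    and eta: "\<eta> > 0" and gam: "\<gamma> \<noteq> 0" and kap: "0 < \<kappa>" "\<kappa> \<le> 1"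
    and Cpos: "C > 0" and sig: "\<sigma>DP \<ge> 0"
    and grad_f: "\<And>i x. i < N \<Longrightarrow> (f i has_derivative (\<lambda>h. gf i x \<bullet> h)) (at x)"
    and F_def: "\<And>x. F x = (\<Sum>i<N. f i x) / real N"
    and grad_F: "\<And>x. (F has_derivative (\<lambda>h. GF x \<bullet> h)) (at x)"
    and A1: "\<And>i x y. i < N \<Longrightarrow> norm (gf i x - gf i y) \<le> L * norm (x - y)"
    and A2: "\<And>x. (\<Sum>i<N. (norm (gf i x - GF x))\<^sup>2) / real N \<le> \<sigma>SGD\<^sup>2"
    and A3: "\<And>i x. i < N \<Longrightarrow> norm (gf i x) \<le> G"
    and Cbig: "C \<ge> (1 + 2 * (1 - \<kappa>) / \<kappa>) * G"
    and t1: "t \<ge> 1"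
  shows
   "(let S = disk_state gf x0 \<eta> \<gamma> \<kappa> C B bs ws;
         xt = fst (S t);
         xprev = fst (S (t - 1));
         Delta_prev = GF xprev - fst (snd (S t));
         M = 1 + 4 * (2 + 1 / \<kappa> + \<bar>1 + \<gamma>\<bar>) / \<gamma>\<^sup>2
     in (\<integral>\<^sup>+ bt. \<integral>\<^sup>+ w. ennreal ((norm (GF xt - fst (snd (disk_step gf \<eta> \<gamma> \<kappa> C B (S t) bt w))))\<^sup>2)
            \<partial>(gauss_noise \<sigma>DP) \<partial>(measure_pmf (batch_pmf N B)))
        \<le> ennreal ((1 - \<kappa>)\<^sup>2 * (1 + 4 * \<eta>\<^sup>2 * L\<^sup>2 + \<bar>1 + \<gamma>\<bar> * (\<kappa> + 2 * \<eta>\<^sup>2 * L\<^sup>2 * M))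
                     * (norm Delta_prev)\<^sup>2
                   + 2 * \<eta>\<^sup>2 * L\<^sup>2 * (1 - \<kappa>)\<^sup>2 * (2 + \<bar>1 + \<gamma>\<bar> * M) * (norm (GF xprev))\<^sup>2
                   + \<kappa>\<^sup>2 * ((2 + \<bar>1 + \<gamma>\<bar>) * \<sigma>SGD\<^sup>2 / real B + real CARD('d) * \<sigma>DP\<^sup>2)))"
proof -
  define S where "S = disk_state gf x0 \<eta> \<gamma> \<kappa> C B bs ws"
  define x where "x = fst (S t)"
  define gt where "gt = fst (snd (S t))"
  define dd where "dd = snd (snd (S t))"
  define xp where "xp = fst (S (t - 1))"
  define M where "M = 1 + 4 * (2 + 1 / \<kappa> + \<bar>1 + \<gamma>\<bar>) / \<gamma>\<^sup>2"
  define a where "a = (1-\<kappa>)/(\<kappa>*\<gamma>)"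
  define y where "y = x + \<gamma> *\<^sub>R dd"
  define z where "z = (\<lambda>i. a *\<^sub>R gf i y + (1 - a) *\<^sub>R gf i x)"
  define u where "u = (\<lambda>i. clip (z i) C)"
  define ub where "ub = (1 / real N) *\<^sub>R (\<Sum>i<N. u i)"
  define v where "v = (\<lambda>bt. (1 / real B) *\<^sub>R (\<Sum>i\<leftarrow>bt. u i))"
  define m where "m = (\<lambda>bt. GF x - (1-\<kappa>) *\<^sub>R gt - \<kappa> *\<^sub>R v bt)"
  define mb where "mb = GF x - (1-\<kappa>) *\<^sub>R gt - \<kappa> *\<^sub>R ub"
  define SS where "SS = {bs. set bs \<subseteq> {..<N} \<and> length bs = B}"
  define yv where "yv = (\<lambda>i. u i - ub)"
  define Y where "Y = (\<lambda>bt. \<Sum>i\<leftarrow>bt. yv i)"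
  define V where "V = (\<Sum>i<N. (norm (yv i))\<^sup>2)"
  define e where "e = \<bar>1+\<gamma>\<bar>"
  define h where "h = L * \<eta>"
  define r where "r = norm gt"
  define K where "K = Kc \<kappa> \<gamma>"
  define P where "P = norm (GF xp - gt)"
  define Q where "Q = norm (GF xp)"
  define cd where "cd = real CARD('d) * \<sigma>DP\<^sup>2"
  define c0 where "c0 = \<kappa>\<^sup>2 * cd"

  have St: "S t = (x, gt, dd)" by (simp add: x_def gt_def dd_def)
  have Sstep: "S t = disk_step gf \<eta> \<gamma> \<kappa> C B (S (t-1)) (bs (t-1)) (ws (t-1))"
  proof -
    have "t = Suc (t-1)" using t1 by simp
    then show ?thesis unfolding S_def by (metis disk_state.simps(2))
  qed
  have x_eq: "x = xp - \<eta> *\<^sub>R gt" and dd_eq: "dd = x - xp"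
    unfolding x_def gt_def dd_def xp_def by (simp_all add: Sstep disk_step_def Let_def)
  have dd2: "dd = - \<eta> *\<^sub>R gt" using x_eq dd_eq by simp
  have xp_eq: "xp = x + \<eta> *\<^sub>R gt" using x_eq by simp

  have LHS1: "(\<integral>\<^sup>+ bt. \<integral>\<^sup>+ w. ennreal ((norm (GF x - fst (snd (disk_step gf \<eta> \<gamma> \<kappa> C B (S t) bt w))))\<^sup>2)
            \<partial>(gauss_noise \<sigma>DP) \<partial>(measure_pmf (batch_pmf N B)))
      = (\<integral>\<^sup>+ bt. ennreal ((norm (m bt))\<^sup>2 + c0) \<partial>(measure_pmf (batch_pmf N B)))"
  proof (rule nn_integral_cong)
    fix bt
    have "\<And>w. GF x - fst (snd (disk_step gf \<eta> \<gamma> \<kappa> C B (S t) bt w)) = m bt - \<kappa> *\<^sub>R w"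
      unfolding St by (simp add: disk_step_def Let_def m_def v_def u_def z_def y_def a_def algebra_simps)
    then have "(\<integral>\<^sup>+ w. ennreal ((norm (GF x - fst (snd (disk_step gf \<eta> \<gamma> \<kappa> C B (S t) bt w))))\<^sup>2) \<partial>(gauss_noise \<sigma>DP))
        = (\<integral>\<^sup>+ w. ennreal ((norm (m bt - \<kappa> *\<^sub>R w))\<^sup>2) \<partial>(gauss_noise \<sigma>DP))" by simp
    also have "\<dots> = ennreal ((norm (m bt))\<^sup>2 + \<kappa>\<^sup>2 * real CARD('d) * \<sigma>DP\<^sup>2)" by (rule gauss_sq)
    finally show "(\<integral>\<^sup>+ w. ennreal ((norm (GF x - fst (snd (disk_step gf \<eta> \<gamma> \<kappa> C B (S t) bt w))))\<^sup>2) \<partial>(gauss_noise \<sigma>DP))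
        = ennreal ((norm (m bt))\<^sup>2 + c0)" unfolding c0_def cd_def by (simp add: algebra_simps)
  qed
  have fin: "finite SS" unfolding SS_def by (rule finite_lists_length_eq) simp
  have ne: "SS \<noteq> {}"
  proof -
    have "replicate B 0 \<in> SS" unfolding SS_def using N by auto
    then show ?thesis by auto
  qed
  have cardSS: "card SS = N ^ B" unfolding SS_def using card_lists_length_eq[of "{..<N}" B] by simp
  have bp: "batch_pmf N B = pmf_of_set SS" unfolding batch_pmf_def SS_def ..
  have yv0: "(\<Sum>i<N. yv i) = 0"
  proof -
    have "(\<Sum>i<N. yv i) = (\<Sum>i<N. u i) - real N *\<^sub>R ub" unfolding yv_def
      by (simp only: sum_subtractf sum_constant_scaleR card_lessThan)
    also have "real N *\<^sub>R ub = (\<Sum>i<N. u i)" using N unfolding ub_def by simp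
    finally show ?thesis by simp
  qed
  have mY: "m bt = mb - (\<kappa> / real B) *\<^sub>R Y bt" if bt: "bt \<in> SS" for bt
  proof -
    have lb: "length bt = B" using bt unfolding SS_def by simp
    have "(\<Sum>i\<leftarrow>bt. u i) = (\<Sum>i\<leftarrow>bt. yv i + ub)" unfolding yv_def by simp
    also have "\<dots> = Y bt + real B *\<^sub>R ub" unfolding Y_def using sum_list_add_const[of yv ub bt] lb by simp
    finally have "v bt = (1 / real B) *\<^sub>R Y bt + ub" unfolding v_def using Bpos by (simp add: scaleR_add_right)
    then show ?thesis unfolding m_def mb_def by (simp add: algebra_simps)
  qed
  have sq: "(norm (m bt))\<^sup>2 + c0 = ((norm mb)\<^sup>2 + c0) - 2*(\<kappa>/real B)*(mb \<bullet> Y bt) + (\<kappa>/real B)\<^sup>2*(norm (Y bt))\<^sup>2"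
    if bt: "bt \<in> SS" for bt
    unfolding mY[OF bt] norm_diff_sq by (simp add: power_mult_distrib power_divide power2_abs)
  have sY: "(\<Sum>bt\<in>SS. Y bt) = 0" unfolding SS_def Y_def using batch_sum0[of yv N B] yv0 by simp
  have sY2: "real N * (\<Sum>bt\<in>SS. (norm (Y bt))\<^sup>2) = real B * real N ^ B * V"
    unfolding SS_def Y_def V_def using batch_sumsq[of yv N B] yv0 by simp
  have Npos: "real N > 0" using N by simp
  have "(\<Sum>bt\<in>SS. (norm (m bt))\<^sup>2 + c0)
      = (\<Sum>bt\<in>SS. ((norm mb)\<^sup>2 + c0) - 2*(\<kappa>/real B)*(mb \<bullet> Y bt) + (\<kappa>/real B)\<^sup>2*(norm (Y bt))\<^sup>2)"
    using sq by (rule sum.cong[OF refl])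
  also have "\<dots> = real (card SS) * ((norm mb)\<^sup>2 + c0) - 2*(\<kappa>/real B)*(mb \<bullet> (\<Sum>bt\<in>SS. Y bt))
       + (\<kappa>/real B)\<^sup>2*(\<Sum>bt\<in>SS. (norm (Y bt))\<^sup>2)"
    by (simp add: sum.distrib sum_subtractf sum_distrib_left inner_sum_right)
  also have "\<dots> = real N ^ B * ((norm mb)\<^sup>2 + c0) + (\<kappa>/real B)\<^sup>2*(real B * real N ^ B * V / real N)"
  proof -
    have sY3: "(\<Sum>bt\<in>SS. (norm (Y bt))\<^sup>2) = real B * real N ^ B * V / real N"
      using sY2 Npos by (simp add: eq_divide_eq mult.commute)
    show ?thesis unfolding sY3 sY cardSS by simp
  qed
  finally have "(\<Sum>bt\<in>SS. (norm (m bt))\<^sup>2 + c0) = real N ^ B * ((norm mb)\<^sup>2 + c0 + \<kappa>\<^sup>2 * V / (real B * real N))"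
    using Bpos Npos by (simp add: field_simps power2_eq_square)
  then have avg: "(\<Sum>bt\<in>SS. (norm (m bt))\<^sup>2 + c0) / real (card SS) = (norm mb)\<^sup>2 + \<kappa>\<^sup>2 * V / (real B * real N) + c0"
    using cardSS Npos by simp
  have LHS2: "(\<integral>\<^sup>+ bt. ennreal ((norm (m bt))\<^sup>2 + c0) \<partial>(measure_pmf (batch_pmf N B)))
     = ennreal ((norm mb)\<^sup>2 + \<kappa>\<^sup>2 * V / (real B * real N) + c0)"
  proof -
    have c00: "0 \<le> c0" unfolding c0_def cd_def by simp
    have "(\<integral>\<^sup>+ bt. ennreal ((norm (m bt))\<^sup>2 + c0) \<partial>(measure_pmf (batch_pmf N B)))
        = (\<Sum>bt\<in>SS. ennreal ((norm (m bt))\<^sup>2 + c0)) / of_nat (card SS)"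
      unfolding bp by (rule nn_integral_pmf_of_set[OF ne fin])
    also have "\<dots> = ennreal (\<Sum>bt\<in>SS. (norm (m bt))\<^sup>2 + c0) / ennreal (real (card SS))"
      using c00 by (subst sum_ennreal) (auto simp: ennreal_of_nat_eq_real_of_nat)
    also have "\<dots> = ennreal ((\<Sum>bt\<in>SS. (norm (m bt))\<^sup>2 + c0) / real (card SS))"
      using c00 fin ne by (intro divide_ennreal) (auto intro: sum_nonneg simp: card_gt_0_iff)
    finally show ?thesis unfolding avg .
  qed
  have G0: "0 \<le> G" using A3[of 0] N by (meson norm_ge_zero order_trans less_le_trans zero_less_one le_less_trans)
  have L0: "0 \<le> L"
  proof -
    define o1 :: "real^'d" where "o1 = (\<chi> i. (1::real))"
    have "o1 \<noteq> 0" unfolding o1_def by (metis vec_lambda_beta zero_index zero_neq_one)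
    then have np: "norm o1 > 0" by simp
    have "0 \<le> L * norm (o1 - 0)" using A1[of 0 o1 0] N by (meson norm_ge_zero order_trans less_le_trans zero_less_one le_less_trans)
    then show ?thesis using np by (simp add: zero_le_mult_iff)
  qed
  have h0: "0 \<le> h" unfolding h_def using L0 eta by simp
  have r0: "0 \<le> r" unfolding r_def by simp
  have e0: "0 \<le> e" unfolding e_def by simp
  have K0: "0 \<le> K" unfolding K_def using Kc_nonneg kap by simp
  have GFavg: "\<And>x. GF x = (1 / real N) *\<^sub>R (\<Sum>i<N. gf i x)" using GF_avg[OF grad_f F_def grad_F] by blast
  have Npos': "real N > 0" using N by simp
  have nx: "norm (x - xp) = \<eta> * r" unfolding xp_eq r_def using eta by simp
  have ny: "norm (y - x) = \<bar>\<gamma>\<bar> * (\<eta> * r)" unfolding y_def dd2 r_def using eta by (simp add: abs_mult)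
  have nxy: "norm (xp - y) = \<bar>1+\<gamma>\<bar> * (\<eta> * r)"
  proof -
    have "xp - y = ((1+\<gamma>) * \<eta>) *\<^sub>R gt" unfolding xp_eq y_def dd2 by (simp add: algebra_simps)
    then show ?thesis unfolding r_def using eta by (simp add: abs_mult)
  qed
  have Wi: "norm (gf i x - (1-\<kappa>) *\<^sub>R gf i xp - \<kappa> *\<^sub>R u i) \<le> (1-\<kappa>) * K * e * (h * r)" if i: "i < N" for i
  proof -
    have wp: "norm (gf i x - gf i xp) \<le> h * r" using A1[OF i, of x xp] nx unfolding h_def by (simp add: mult.assoc)
    have qw: "norm (gf i y - gf i x) \<le> \<bar>\<gamma>\<bar> * (h * r)" using A1[OF i, of y x] ny unfolding h_def by (simp add: algebra_simps)
    have pq: "norm (gf i xp - gf i y) \<le> \<bar>1+\<gamma>\<bar> * (h * r)" using A1[OF i, of xp y] nxy unfolding h_def by (simp add: algebra_simps)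
    have "norm (gf i x - (1-\<kappa>) *\<^sub>R gf i xp - \<kappa> *\<^sub>R clip (((1-\<kappa>)/(\<kappa>*\<gamma>)) *\<^sub>R gf i y + (1 - (1-\<kappa>)/(\<kappa>*\<gamma>)) *\<^sub>R gf i x) C)
         \<le> (1-\<kappa>) * Kc \<kappa> \<gamma> * \<bar>1+\<gamma>\<bar> * (h * r)"
      by (rule sample_bound[OF kap(1) kap(2) gam Cpos Cbig A3[OF i] A3[OF i] A3[OF i] wp qw pq])
    then show ?thesis unfolding u_def z_def a_def K_def e_def .
  qed
  have Weq: "GF x - (1-\<kappa>) *\<^sub>R GF xp - \<kappa> *\<^sub>R ub = (1 / real N) *\<^sub>R (\<Sum>i<N. gf i x - (1-\<kappa>) *\<^sub>R gf i xp - \<kappa> *\<^sub>R u i)"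
  proof -
    have "(\<Sum>i<N. gf i x - (1-\<kappa>) *\<^sub>R gf i xp - \<kappa> *\<^sub>R u i) = (\<Sum>i<N. gf i x) - (1-\<kappa>) *\<^sub>R (\<Sum>i<N. gf i xp) - \<kappa> *\<^sub>R (\<Sum>i<N. u i)"
      by (simp add: sum_subtractf scaleR_sum_right)
    then show ?thesis unfolding GFavg[of x] GFavg[of xp] ub_def by (simp add: scaleR_diff_right scaleR_scaleR mult.commute)
  qed
  have Wn: "norm (GF x - (1-\<kappa>) *\<^sub>R GF xp - \<kappa> *\<^sub>R ub) \<le> (1-\<kappa>) * K * e * (h * r)"
  proof -
    have "norm (\<Sum>i<N. gf i x - (1-\<kappa>) *\<^sub>R gf i xp - \<kappa> *\<^sub>R u i) \<le> (\<Sum>i<N. norm (gf i x - (1-\<kappa>) *\<^sub>R gf i xp - \<kappa> *\<^sub>R u i))"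
      by (rule norm_sum)
    also have "\<dots> \<le> (\<Sum>i<N. (1-\<kappa>) * K * e * (h * r))" using Wi by (intro sum_mono) simp
    also have "\<dots> = real N * ((1-\<kappa>) * K * e * (h * r))" by simp
    finally have "norm (\<Sum>i<N. gf i x - (1-\<kappa>) *\<^sub>R gf i xp - \<kappa> *\<^sub>R u i) \<le> real N * ((1-\<kappa>) * K * e * (h * r))" .
    then show ?thesis unfolding Weq using Npos by (simp add: field_simps)
  qed
  have mb_eq: "mb = (1-\<kappa>) *\<^sub>R (GF xp - gt) + (GF x - (1-\<kappa>) *\<^sub>R GF xp - \<kappa> *\<^sub>R ub)"
    unfolding mb_def by (simp add: algebra_simps)
  have nm: "norm mb \<le> (1-\<kappa>)*P + (1-\<kappa>)*K*e*h*r"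
  proof -
    have "norm mb \<le> norm ((1-\<kappa>) *\<^sub>R (GF xp - gt)) + norm (GF x - (1-\<kappa>) *\<^sub>R GF xp - \<kappa> *\<^sub>R ub)"
      unfolding mb_eq by (rule norm_triangle_ineq)
    also have "norm ((1-\<kappa>) *\<^sub>R (GF xp - gt)) = (1-\<kappa>) * P" unfolding P_def using kap by simp
    finally show ?thesis using Wn by (simp add: algebra_simps)
  qed
  have agam2: "a\<^sup>2 * \<gamma>\<^sup>2 = ((1-\<kappa>)/\<kappa>)\<^sup>2" unfolding a_def using gam kap by (simp add: field_simps power2_eq_square)
  have V1: "V \<le> (\<Sum>i<N. (norm (u i - clip (GF x) C))\<^sup>2)"
    using var_min[OF N, of u "clip (GF x) C"] unfolding V_def yv_def ub_def .
  also have "\<dots> \<le> (\<Sum>i<N. (2+e) * (norm (gf i x - GF x))\<^sup>2 + 2 * (((1-\<kappa>)/\<kappa>)\<^sup>2 * (h*r)\<^sup>2))"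
  proof (rule sum_mono)
    fix i assume "i \<in> {..<N}"
    then have i: "i < N" by simp
    have "norm (u i - clip (GF x) C) \<le> norm (z i - GF x)" unfolding u_def by (rule clip_nonexp[OF Cpos])
    then have "(norm (u i - clip (GF x) C))\<^sup>2 \<le> (norm (z i - GF x))\<^sup>2" by (simp add: power_mono)
    also have "z i - GF x = (gf i x - GF x) + a *\<^sub>R (gf i y - gf i x)" unfolding z_def by (simp add: algebra_simps)
    also have "(norm ((gf i x - GF x) + a *\<^sub>R (gf i y - gf i x)))\<^sup>2 \<le> (2+e) * (norm (gf i x - GF x))\<^sup>2 + 2 * (norm (a *\<^sub>R (gf i y - gf i x)))\<^sup>2"
      by (rule norm_add_sq_bound[OF e0])
    also have "(norm (a *\<^sub>R (gf i y - gf i x)))\<^sup>2 \<le> ((1-\<kappa>)/\<kappa>)\<^sup>2 * (h*r)\<^sup>2"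
    proof -
      have qw: "norm (gf i y - gf i x) \<le> \<bar>\<gamma>\<bar> * (h * r)" using A1[OF i, of y x] ny unfolding h_def by (simp add: algebra_simps)
      have "(norm (a *\<^sub>R (gf i y - gf i x)))\<^sup>2 = a\<^sup>2 * (norm (gf i y - gf i x))\<^sup>2" by (simp add: power_mult_distrib)
      also have "\<dots> \<le> a\<^sup>2 * (\<bar>\<gamma>\<bar> * (h * r))\<^sup>2" using qw by (intro mult_left_mono power_mono) auto
      also have "\<dots> = (a\<^sup>2 * \<gamma>\<^sup>2) * (h*r)\<^sup>2" by (simp add: power_mult_distrib)
      finally show ?thesis unfolding agam2 .
    qed
    finally show "(norm (u i - clip (GF x) C))\<^sup>2 \<le> (2+e) * (norm (gf i x - GF x))\<^sup>2 + 2 * (((1-\<kappa>)/\<kappa>)\<^sup>2 * (h*r)\<^sup>2)"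
      by simp
  qed
  also have "\<dots> = (2+e) * (\<Sum>i<N. (norm (gf i x - GF x))\<^sup>2) + real N * (2 * (((1-\<kappa>)/\<kappa>)\<^sup>2 * (h*r)\<^sup>2))"
    by (simp add: sum.distrib sum_distrib_left)
  also have "\<dots> \<le> (2+e) * (real N * \<sigma>SGD\<^sup>2) + real N * (2 * (((1-\<kappa>)/\<kappa>)\<^sup>2 * (h*r)\<^sup>2))"
  proof -
    have "(\<Sum>i<N. (norm (gf i x - GF x))\<^sup>2) \<le> real N * \<sigma>SGD\<^sup>2" using A2[of x] Npos by (simp add: divide_le_eq mult.commute)
    then show ?thesis using e0 by (simp add: mult_left_mono)
  qed
  finally have Vb: "V \<le> real N * ((2+e) * \<sigma>SGD\<^sup>2 + 2 * (((1-\<kappa>)/\<kappa>)\<^sup>2 * (h*r)\<^sup>2))" by (simp add: algebra_simps)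
  have VB: "\<kappa>\<^sup>2 * V / (real B * real N) \<le> ((2+e)*\<kappa>\<^sup>2*\<sigma>SGD\<^sup>2 + 2*(1-\<kappa>)\<^sup>2*h\<^sup>2*r\<^sup>2)/real B"
  proof -
    have "\<kappa>\<^sup>2 * V \<le> \<kappa>\<^sup>2 * (real N * ((2+e) * \<sigma>SGD\<^sup>2 + 2 * (((1-\<kappa>)/\<kappa>)\<^sup>2 * (h*r)\<^sup>2)))"
      using Vb by (rule mult_left_mono) simp
    also have "\<dots> = real N * ((2+e)*\<kappa>\<^sup>2*\<sigma>SGD\<^sup>2 + 2*(1-\<kappa>)\<^sup>2*h\<^sup>2*r\<^sup>2)"
      using kap by (simp add: field_simps power2_eq_square)
    finally have "\<kappa>\<^sup>2 * V \<le> real N * ((2+e)*\<kappa>\<^sup>2*\<sigma>SGD\<^sup>2 + 2*(1-\<kappa>)\<^sup>2*h\<^sup>2*r\<^sup>2)" .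
    then show ?thesis using Npos Bpos by (simp add: field_simps)
  qed
  have rPQ: "r \<le> P + Q"
  proof -
    have "gt = GF xp - (GF xp - gt)" by simp
    then have "r \<le> norm (GF xp) + norm (GF xp - gt)" unfolding r_def by (metis norm_triangle_ineq4)
    then show ?thesis unfolding P_def Q_def by simp
  qed
  have KM: "K\<^sup>2 * (1/\<kappa> + e) \<le> M" unfolding K_def e_def M_def using Kc_cond[OF kap gam] .
  have fin_ineq: "(norm mb)\<^sup>2 + \<kappa>\<^sup>2 * V / (real B * real N) + \<kappa>\<^sup>2 * cd
      \<le> (1-\<kappa>)\<^sup>2*(1 + 4*h\<^sup>2 + e*(\<kappa> + 2*h\<^sup>2*M))*P\<^sup>2 + 2*h\<^sup>2*(1-\<kappa>)\<^sup>2*(2 + e*M)*Q\<^sup>2 + \<kappa>\<^sup>2*((2+e)*\<sigma>SGD\<^sup>2/real B + cd)"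
    by (rule final_alg[OF kap e0 h0 K0 _ _ r0 rPQ _ _ nm VB KM]) (use Bpos in \<open>auto simp: P_def Q_def\<close>)
  have eqR: "(1-\<kappa>)\<^sup>2*(1 + 4*h\<^sup>2 + e*(\<kappa> + 2*h\<^sup>2*M))*P\<^sup>2 + 2*h\<^sup>2*(1-\<kappa>)\<^sup>2*(2 + e*M)*Q\<^sup>2 + \<kappa>\<^sup>2*((2+e)*\<sigma>SGD\<^sup>2/real B + cd)
     = (1 - \<kappa>)\<^sup>2 * (1 + 4 * \<eta>\<^sup>2 * L\<^sup>2 + \<bar>1 + \<gamma>\<bar> * (\<kappa> + 2 * \<eta>\<^sup>2 * L\<^sup>2 * M)) * (norm (GF xp - gt))\<^sup>2
                   + 2 * \<eta>\<^sup>2 * L\<^sup>2 * (1 - \<kappa>)\<^sup>2 * (2 + \<bar>1 + \<gamma>\<bar> * M) * (norm (GF xp))\<^sup>2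
                   + \<kappa>\<^sup>2 * ((2 + \<bar>1 + \<gamma>\<bar>) * \<sigma>SGD\<^sup>2 / real B + real CARD('d) * \<sigma>DP\<^sup>2)"
    unfolding h_def e_def P_def Q_def cd_def by (simp add: power_mult_distrib algebra_simps)
  have main: "(\<integral>\<^sup>+ bt. \<integral>\<^sup>+ w. ennreal ((norm (GF x - fst (snd (disk_step gf \<eta> \<gamma> \<kappa> C B (S t) bt w))))\<^sup>2)
            \<partial>(gauss_noise \<sigma>DP) \<partial>(measure_pmf (batch_pmf N B)))
        \<le> ennreal ((1 - \<kappa>)\<^sup>2 * (1 + 4 * \<eta>\<^sup>2 * L\<^sup>2 + \<bar>1 + \<gamma>\<bar> * (\<kappa> + 2 * \<eta>\<^sup>2 * L\<^sup>2 * M)) * (norm (GF xp - gt))\<^sup>2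
                   + 2 * \<eta>\<^sup>2 * L\<^sup>2 * (1 - \<kappa>)\<^sup>2 * (2 + \<bar>1 + \<gamma>\<bar> * M) * (norm (GF xp))\<^sup>2
                   + \<kappa>\<^sup>2 * ((2 + \<bar>1 + \<gamma>\<bar>) * \<sigma>SGD\<^sup>2 / real B + real CARD('d) * \<sigma>DP\<^sup>2))"
    unfolding LHS1 LHS2 eqR[symmetric] using fin_ineq unfolding c0_def by (intro ennreal_leI) simp
  show ?thesis unfolding Let_def S_def[symmetric] x_def[symmetric] gt_def[symmetric] xp_def[symmetric] M_def[symmetric]
    using main .
qed

end
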